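(* Let $\mathfrak{G}\subset\mathbb{R}^3$ be the Gaussian bell-shaped surface $z=f(x,y)=\frac32e^{-(x^2+y^2)}$ with the Riemannian metric $h$ induced from $\mathbb{R}^3$, let $\bar g>0$, and let $\mathbf{G}^T=-\bar g\,\mathrm{grad}_hf=-\frac{\bar g}{q+1}\big(f_x\frac{\partial}{\partial x}+f_y\frac{\partial}{\partial y}\big)$, $q=f_x^2+f_y^2$, be the gravitational wind on $\mathfrak{G}$. Let $\tilde\eta\in[0,1]$ and let $\tilde F_{\tilde\eta}$ be the slippery-cross-slope metric on $\mathfrak{G}$, i.e. at each $(x,y)\in T\mathfrak{G}\setminus\{0\}$ the positive solution $\tilde F$ of $F(x,y-\tilde F\,\mathbf{G}^T)=\tilde F$ with $F=\frac{\alpha^2}{\alpha+\tilde\eta\bar g\beta}$, $\alpha=\sqrt{h(y,y)}$, $\beta=-\frac1{\bar g}h(y,\mathbf{G}^T)$. Then the indicatrix of $\tilde F_{\tilde\eta}$ is strongly convex on the entire surface $\mathfrak{G}$ if and only if $\bar g<\delta_2(\tilde\eta)$, where $\delta_2(\tilde\eta)=\frac{\sqrt{2e+9}}{3(1-\tilde\eta)}$ if $\tilde\eta\in[0,\frac13]$ and $\delta_2(\tilde\eta)=\frac{\sqrt{2e+9}}{6\tilde\eta}$ if $\tilde\eta\in(\frac13,1]$.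
   Context: The slippery-cross-slope metric equivalently satisfies $\tilde F\sqrt{\alpha^2+2\bar g\beta\tilde F+\|\mathbf{G}^T\|_h^2\tilde F^2}=\alpha^2+(2-\tilde\eta)\bar g\beta\tilde F+(1-\tilde\eta)\|\mathbf{G}^T\|_h^2\tilde F^2$. *)

theory Defs
  imports "HOL-Analysis.Analysis"
begin

(* Global chart of the Gaussian bell surface z = f(x,y); a point of the surface is
   given by its parameters p = (x,y), a tangent vector by its components w = (u,v)
   w.r.t. the coordinate fields d/dx, d/dy. *)

definition gauss_f :: "real \<times> real \<Rightarrow> real" where
  "gauss_f p = 3/2 * exp (-((fst p)^2 + (snd p)^2))"

definition gauss_fx :: "real \<times> real \<Rightarrow> real" where
  "gauss_fx p = -2 * fst p * gauss_f p"

definition gauss_fy :: "real \<times> real \<Rightarrow> real" where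
  "gauss_fy p = -2 * snd p * gauss_f p"

definition gauss_q :: "real \<times> real \<Rightarrow> real" where
  "gauss_q p = (gauss_fx p)^2 + (gauss_fy p)^2"

(* induced metric h from R^3: pull-back of the Euclidean metric by (x,y) |-> (x,y,f(x,y)) *)
definition hmet :: "real \<times> real \<Rightarrow> real \<times> real \<Rightarrow> real \<times> real \<Rightarrow> real" where
  "hmet p w1 w2 = fst w1 * fst w2 + snd w1 * snd w2
     + (gauss_fx p * fst w1 + gauss_fy p * snd w1) * (gauss_fx p * fst w2 + gauss_fy p * snd w2)"

definition wind :: "real \<Rightarrow> real \<times> real \<Rightarrow> real \<times> real" where
  "wind gbar p = (- gbar / (gauss_q p + 1)) *\<^sub>R (gauss_fx p, gauss_fy p)"

definition alpha :: "real \<times> real \<Rightarrow> real \<times> real \<Rightarrow> real" where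
  "alpha p w = sqrt (hmet p w w)"

definition beta :: "real \<Rightarrow> real \<times> real \<Rightarrow> real \<times> real \<Rightarrow> real" where
  "beta gbar p w = - (1 / gbar) * hmet p w (wind gbar p)"

definition Fbase :: "real \<Rightarrow> real \<Rightarrow> real \<times> real \<Rightarrow> real \<times> real \<Rightarrow> real" where
  "Fbase gbar eta p w = (alpha p w)^2 / (alpha p w + eta * gbar * beta gbar p w)"

definition slippery :: "real \<Rightarrow> real \<Rightarrow> real \<times> real \<Rightarrow> real \<times> real \<Rightarrow> real" where
  "slippery gbar eta p w = (THE t. t > 0 \<and> Fbase gbar eta p (w - t *\<^sub>R wind gbar p) = t)"

definition hessian_posdef :: "(real \<times> real \<Rightarrow> real) \<Rightarrow> real \<times> real \<Rightarrow> bool" where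
  "hessian_posdef L y \<longleftrightarrow>
     (\<exists>grad H. (\<forall>\<^sub>F z in nhds y. (L has_derivative (\<lambda>k. grad z \<bullet> k)) (at z))
        \<and> (grad has_derivative H) (at y)
        \<and> (\<forall>k. k \<noteq> 0 \<longrightarrow> H k \<bullet> k > 0))"

(* the indicatrix of the slippery-cross-slope metric is strongly convex on the whole surface:
   at every point and every nonzero tangent vector the positive solution exists uniquely,
   and the fundamental tensor (Hessian of the square of the metric) is positive definite *)
definition slippery_strongly_convex :: "real \<Rightarrow> real \<Rightarrow> bool" where
  "slippery_strongly_convex gbar eta \<longleftrightarrow>
     (\<forall>p w. w \<noteq> 0 \<longrightarrow>
        (\<exists>!t. t > 0 \<and> Fbase gbar eta p (w - t *\<^sub>R wind gbar p) = t)
        \<and> hessian_posdef (\<lambda>z. (slippery gbar eta p z)^2) w)"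

definition delta2 :: "real \<Rightarrow> real" where
  "delta2 eta = (if eta \<le> 1/3 then sqrt (2 * exp 1 + 9) / (3 * (1 - eta))
                 else sqrt (2 * exp 1 + 9) / (6 * eta))"

end

theory Submission
  imports Defs
begin
definition N0 :: "real \<Rightarrow> real \<times> real \<Rightarrow> real" where
  "N0 c u = (norm u)^2 / (norm u - c * fst u)"

definition GN :: "real \<Rightarrow> real \<times> real \<Rightarrow> real \<times> real" where
  "GN c u = ((fst u * (norm u - 2 * c * fst u) + c * (norm u)^2) / (norm u - c * fst u)^2,
             snd u * (norm u - 2 * c * fst u) / (norm u - c * fst u)^2)"

definition DGN :: "real \<Rightarrow> real \<times> real \<Rightarrow> real \<times> real \<Rightarrow> real \<times> real" where
  "DGN c u v = (let r = norm u; D = r - c * fst u; E = r - 2 * c * fst u;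
      P = fst u * fst v + snd u * snd v in
     ((D * E * fst v + (3 * c * fst u - r)/r * P * fst u - 2 * c^2 * fst u * (fst v * fst u + P) + 2 * c^2 * r^2 * fst v) / D^3,
      (D * E * snd v + (3 * c * fst u - r)/r * P * snd u - 2 * c^2 * fst u * fst v * snd u) / D^3))"

lemma norm_pair_sq: "(norm (x::real\<times>real))^2 = (fst x)^2 + (snd x)^2"
  by (cases x) (simp add: norm_Pair)

lemma fst_le_norm: "\<bar>fst (x::real\<times>real)\<bar> \<le> norm x"
  by (cases x) (simp add: norm_Pair real_sqrt_ge_abs1)

lemma den_pos:
  fixes u :: "real \<times> real"
  assumes "0 \<le> c" "c < 1" "u \<noteq> 0"
  shows "norm u - c * fst u > 0"
proof -
  have "c * fst u \<le> c * norm u" using fst_le_norm[of u] assms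
    by (meson abs_ge_self mult_left_mono order_trans)
  moreover have "c * norm u < norm u" using assms by simp
  ultimately show ?thesis by linarith
qed

lemma N0_pos:
  fixes u :: "real \<times> real"
  assumes "0 \<le> c" "c < 1" "u \<noteq> 0"
  shows "N0 c u > 0"
  using den_pos[OF assms] assms unfolding N0_def by simp

lemma N0_zero [simp]: "N0 c 0 = 0" by (simp add: N0_def)

lemma N0_hom:
  assumes "l > 0" shows "N0 c (l *\<^sub>R u) = l * N0 c u"
proof -
  have "norm (l *\<^sub>R u) = l * norm u" using assms by simp
  moreover have "fst (l *\<^sub>R u) = l * fst u" by simp
  moreover have "l * norm u - c * (l * fst u) = l * (norm u - c * fst u)" by algebra
  ultimately show ?thesis unfolding N0_def using assms
    by (simp add: power_mult_distrib power2_eq_square)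
qed

lemma sgn_pair: "(k::real\<times>real) \<bullet> sgn u = (fst k * fst u + snd k * snd u) / norm u"
  by (cases k; cases u) (simp add: sgn_div_norm inner_Pair divide_simps)

lemma N0_deriv:
  fixes u :: "real \<times> real"
  assumes "0 \<le> c" "c < 1" "u \<noteq> 0"
  shows "(N0 c has_derivative (\<lambda>k. GN c u \<bullet> k)) (at u)"
proof -
  have D: "norm u - c * fst u > 0" using den_pos[OF assms] by simp
  have r: "norm u > 0" using assms by simp
  obtain u1 u2 where u: "u = (u1, u2)" by (cases u)
  have "((\<lambda>u. (norm u)^2 / (norm u - c * fst u)) has_derivative (\<lambda>k. GN c u \<bullet> k)) (at u)"
    apply (rule derivative_eq_intros has_derivative_norm[OF assms(3)] refl)+
    using D apply simp
    apply (rule ext)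
    subgoal for k
    proof -
      obtain k1 k2 where k: "k = (k1, k2)" by (cases k)
      define R where "R = norm u"
      define DD where "DD = norm u - c * fst u"
      have cu: "c * u1 = R - DD" unfolding R_def DD_def u by simp
      have R0: "R \<noteq> 0" and D0: "DD \<noteq> 0" using r D unfolding R_def DD_def by auto
      show ?thesis
        unfolding sgn_pair GN_def
        unfolding DD_def[symmetric]
        unfolding R_def[symmetric]
        unfolding u k fst_conv snd_conv
        using R0 D0 apply (simp add: inner_Pair field_simps)
        using cu apply algebra
        done
    qed
    done
  then show ?thesis unfolding N0_def[abs_def] by simp
qed

lemma GN_deriv:
  fixes u :: "real \<times> real"
  assumes "0 \<le> c" "c < 1" "u \<noteq> 0"
  shows "(GN c has_derivative DGN c u) (at u)"
proof -
  have D: "norm u - c * fst u > 0" using den_pos[OF assms] by simp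
  have r: "norm u > 0" using assms by simp
  obtain u1 u2 where u: "u = (u1, u2)" by (cases u)
  define R where "R = norm u"
  define DD where "DD = norm u - c * fst u"
  have cu: "c * u1 = R - DD" unfolding R_def DD_def u by simp
  have R0: "R \<noteq> 0" and D0: "DD \<noteq> 0" using r D unfolding R_def DD_def by auto
  have d1: "((\<lambda>u. (fst u * (norm u - 2 * c * fst u) + c * (norm u)^2) / (norm u - c * fst u)^2)
     has_derivative (\<lambda>k. fst (DGN c u k))) (at u)"
    apply (rule derivative_eq_intros has_derivative_norm[OF assms(3)] refl)+
    using D apply simp
    apply (rule ext)
    subgoal for k
    proof -
      obtain k1 k2 where k: "k = (k1, k2)" by (cases k)
      show ?thesis
        unfolding sgn_pair DGN_def Let_def
        unfolding DD_def[symmetric]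
        unfolding R_def[symmetric]
        unfolding u k fst_conv snd_conv
        using R0 D0 apply (simp add: inner_Pair field_simps)
        using cu apply algebra
        done
    qed
    done
  have d2: "((\<lambda>u. snd u * (norm u - 2 * c * fst u) / (norm u - c * fst u)^2)
     has_derivative (\<lambda>k. snd (DGN c u k))) (at u)"
    apply (rule derivative_eq_intros has_derivative_norm[OF assms(3)] refl)+
    using D apply simp
    apply (rule ext)
    subgoal for k
    proof -
      obtain k1 k2 where k: "k = (k1, k2)" by (cases k)
      show ?thesis
        unfolding sgn_pair DGN_def Let_def
        unfolding DD_def[symmetric]
        unfolding R_def[symmetric]
        unfolding u k fst_conv snd_conv
        using R0 D0 apply (simp add: inner_Pair field_simps)
        using cu apply algebra
        done
    qed
    done
  show ?thesis
    using has_derivative_Pair[OF d1 d2] unfolding GN_def[abs_def] by simp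
qed

lemma GN_euler:
  fixes u :: "real \<times> real"
  assumes "0 \<le> c" "c < 1" "u \<noteq> 0"
  shows "GN c u \<bullet> u = N0 c u"
proof -
  have D: "norm u - c * fst u > 0" using den_pos[OF assms] by simp
  have r: "norm u > 0" using assms by simp
  obtain u1 u2 where u: "u = (u1, u2)" by (cases u)
  define R where "R = norm u"
  define DD where "DD = norm u - c * fst u"
  have cu: "c * u1 = R - DD" unfolding R_def DD_def u by simp
  have rr: "R^2 = u1^2 + u2^2" unfolding R_def u by (simp add: norm_Pair)
  have R0: "R \<noteq> 0" and D0: "DD \<noteq> 0" using r D unfolding R_def DD_def by auto
  show ?thesis
    unfolding GN_def N0_def
    unfolding DD_def[symmetric]
    unfolding R_def[symmetric]
    unfolding u fst_conv snd_conv
    using R0 D0 apply (simp add: inner_Pair field_simps)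
    using cu rr apply algebra
    done
qed

lemma DGN_Q:
  fixes u :: "real \<times> real"
  assumes "0 \<le> c" "c < 1" "u \<noteq> 0"
  shows "DGN c u v \<bullet> v = (fst u * snd v - snd u * fst v)^2 * (norm u * (1 + 2 * c^2) - 3 * c * fst u)
      / (norm u * (norm u - c * fst u)^3)"
proof -
  have D: "norm u - c * fst u > 0" using den_pos[OF assms] by simp
  have r: "norm u > 0" using assms by simp
  obtain u1 u2 where u: "u = (u1, u2)" by (cases u)
  obtain v1 v2 where v: "v = (v1, v2)" by (cases v)
  define R where "R = norm u"
  define DD where "DD = norm u - c * fst u"
  have cu: "c * u1 = R - DD" unfolding R_def DD_def u by simp
  have rr: "R^2 = u1^2 + u2^2" unfolding R_def u by (simp add: norm_Pair)
  have R0: "R \<noteq> 0" and D0: "DD \<noteq> 0" using r D unfolding R_def DD_def by auto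
  show ?thesis
    unfolding DGN_def Let_def
    unfolding DD_def[symmetric]
    unfolding R_def[symmetric]
    unfolding u v fst_conv snd_conv
    using R0 D0 apply (simp add: inner_Pair field_simps)
    using cu rr apply algebra
    done
qed

lemma GN1_bound:
  fixes u :: "real \<times> real"
  assumes "0 \<le> c" "c < 1" "u \<noteq> 0" "0 \<le> a" "a < 1 + c"
  shows "1 + GN c u \<bullet> (a, 0) > 0"
proof -
  have D: "norm u - c * fst u > 0" using den_pos[OF assms(1-3)] by simp
  have r: "norm u > 0" using assms by simp
  have fu: "\<bar>fst u\<bar> \<le> norm u" by (rule fst_le_norm)
  define G1 where "G1 = (fst u * (norm u - 2 * c * fst u) + c * (norm u)^2) / (norm u - c * fst u)^2"
  have id: "(1 + c) * (fst u * (norm u - 2 * c * fst u) + c * (norm u)^2) + (norm u - c * fst u)^2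
     = (norm u + fst u) * (norm u * (1 + c + c^2) - (c^2 + 2 * c) * fst u)"
    by algebra
  have "(c^2 + 2 * c) * fst u \<le> (c^2 + 2 * c) * norm u"
    using fu assms by (intro mult_left_mono) auto
  then have f2: "norm u * (1 + c + c^2) - (c^2 + 2 * c) * fst u \<ge> norm u * (1 - c)"
    by (simp add: algebra_simps)
  have "norm u * (1 - c) > 0" using r assms by simp
  moreover have "norm u + fst u \<ge> 0" using fu by linarith
  ultimately have "(norm u + fst u) * (norm u * (1 + c + c^2) - (c^2 + 2 * c) * fst u) \<ge> 0"
    using f2 by (meson less_le_trans mult_nonneg_nonneg nless_le)
  then have "(1 + c) * (fst u * (norm u - 2 * c * fst u) + c * (norm u)^2) + (norm u - c * fst u)^2 \<ge> 0"
    using id by simp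
  then have "(1 + c) * G1 + 1 \<ge> 0" unfolding G1_def using D
    by (simp add: field_simps)
  then have g: "- G1 \<le> 1 / (1 + c)" using assms by (simp add: field_simps)
  have "1 + a * G1 > 0"
  proof (cases "G1 \<ge> 0")
    case True then have "a * G1 \<ge> 0" using assms by simp
    then show ?thesis by linarith
  next
    case False
    then have "a * (- G1) \<le> a * (1 / (1 + c))" using g assms by (intro mult_left_mono) auto
    also have "\<dots> < 1" using assms by (simp add: field_simps)
    finally show ?thesis by simp
  qed
  then show ?thesis unfolding GN_def G1_def by (simp add: inner_Pair mult.commute)
qed

lemma N0_cont_at0: "0 \<le> c \<Longrightarrow> c < 1 \<Longrightarrow> isCont (N0 c) 0"
proof -
  assume c: "0 \<le> c" "c < 1"
  have "((\<lambda>x. x) \<longlongrightarrow> (0::real\<times>real)) (at 0)" by (rule tendsto_ident_at)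
  then have "(N0 c \<longlongrightarrow> 0) (at 0)"
  proof (rule tendsto_0_le[where K = "1 / (1 - c)"])
    show "\<forall>\<^sub>F x in at 0. norm (N0 c x) \<le> norm x * (1 / (1 - c))"
    proof (rule always_eventually, rule allI)
      fix x :: "real \<times> real"
      show "norm (N0 c x) \<le> norm x * (1 / (1 - c))"
      proof (cases "x = 0")
        case True then show ?thesis by simp
      next
        case False
        have D: "norm x - c * fst x > 0" using den_pos[OF c False] .
        have "c * fst x \<le> c * norm x" using fst_le_norm[of x] c
          by (meson abs_ge_self mult_left_mono order_trans)
        then have D2: "norm x - c * fst x \<ge> norm x * (1 - c)" by (simp add: algebra_simps)
        have "N0 c x = (norm x)^2 / (norm x - c * fst x)" by (simp add: N0_def)
        also have "\<dots> \<le> (norm x)^2 / (norm x * (1 - c))"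
          using D D2 False c by (intro divide_left_mono) auto
        also have "\<dots> = norm x * (1 / (1 - c))" using False c by (simp add: power2_eq_square field_simps)
        finally show ?thesis using N0_pos[OF c False] by simp
      qed
    qed
  qed
  then show ?thesis unfolding isCont_def by simp
qed

lemma N0_cont: "0 \<le> c \<Longrightarrow> c < 1 \<Longrightarrow> isCont (N0 c) u"
proof (cases "u = 0")
  case True
  assume "0 \<le> c" "c < 1" then show ?thesis using N0_cont_at0 True by simp
next
  case False
  assume "0 \<le> c" "c < 1"
  then show ?thesis using N0_deriv[OF _ _ False] has_derivative_continuous by blast
qed

lemma N0_continuous_on: "0 \<le> c \<Longrightarrow> c < 1 \<Longrightarrow> continuous_on S (N0 c)"
  by (simp add: N0_cont continuous_at_imp_continuous_on)

lemma crossing_unique: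
  fixes \<phi> :: "real \<Rightarrow> real"
  assumes cont: "continuous_on {0<..} \<phi>"
    and der: "\<And>t. t > 0 \<Longrightarrow> \<phi> t = 0 \<Longrightarrow> \<exists>D<0. (\<phi> has_real_derivative D) (at t)"
    and t1: "t1 > 0" "\<phi> t1 = 0" and t2: "t2 > 0" "\<phi> t2 = 0" and lt: "t1 < t2"
  shows False
proof -
  obtain D1 where D1: "D1 < 0" "(\<phi> has_real_derivative D1) (at t1)" using der t1 by blast
  obtain d where d: "d > 0" "\<And>h. h > 0 \<Longrightarrow> h < d \<Longrightarrow> \<phi> (t1 + h) < \<phi> t1"
    using DERIV_neg_dec_right[OF D1(2) D1(1)] by blast
  obtain m0 where m0: "m0 > 0" "m0 \<le> t2 - t1" "m0 \<le> d" using d lt by (intro that[of "min d (t2 - t1)"]) auto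
  define s1 where "s1 = t1 + m0 / 2"
  have s1: "t1 < s1" "s1 < t2" "\<phi> s1 < 0"
    unfolding s1_def using m0 d(2)[of "m0 / 2"] t1 by auto
  define Z where "Z = {x \<in> {s1..t2}. \<phi> x = 0}"
  have contI: "continuous_on {s1..t2} \<phi>"
    using cont by (rule continuous_on_subset) (use s1 t1 in auto)
  have "closed Z" unfolding Z_def by (rule continuous_closed_preimage_constant[OF contI]) simp
  moreover have "bounded Z" by (rule bounded_subset[OF compact_imp_bounded[OF compact_Icc[of s1 t2]]]) (auto simp: Z_def)
  ultimately have "compact Z" using compact_eq_bounded_closed by blast
  moreover have "Z \<noteq> {}" using t2 s1 unfolding Z_def by auto
  ultimately obtain m where m: "m \<in> Z" "\<And>y. y \<in> Z \<Longrightarrow> m \<le> y"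
    using continuous_attains_inf[of Z "\<lambda>x. x"] by auto
  have m1: "s1 \<le> m" "m \<le> t2" "\<phi> m = 0" using m(1) unfolding Z_def by auto
  have "m \<noteq> s1" using m1 s1 by auto
  with m1 have ms: "s1 < m" by simp
  obtain D2 where D2: "D2 < 0" "(\<phi> has_real_derivative D2) (at m)" using der[of m] m1 ms s1 t1 by auto
  obtain e where e: "e > 0" "\<And>h. h > 0 \<Longrightarrow> h < e \<Longrightarrow> \<phi> m < \<phi> (m - h)"
    using DERIV_neg_dec_left[OF D2(2) D2(1)] by blast
  obtain m1 where m1': "m1 > 0" "m1 \<le> e" "m1 \<le> m - s1" using e ms by (intro that[of "min e (m - s1)"]) auto
  define h where "h = m1 / 2"
  have h: "h > 0" "h < e" "s1 < m - h" using m1' unfolding h_def by auto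
  have pos: "\<phi> (m - h) > 0" using e(2)[OF h(1) h(2)] m1 by simp
  have "continuous_on {s1..m-h} \<phi>" using contI by (rule continuous_on_subset) (use h m1 in auto)
  then obtain x where x: "x \<ge> s1" "x \<le> m - h" "\<phi> x = 0"
    using IVT'[of \<phi> s1 0 "m - h"] s1 pos h by auto
  then have "x \<in> Z" unfolding Z_def using m1 h by auto
  then show False using m(2) x h by fastforce
qed

definition S0 :: "real \<Rightarrow> real \<Rightarrow> real \<times> real \<Rightarrow> real" where
  "S0 a c x = (THE t. t > 0 \<and> N0 c (x - t *\<^sub>R (a, 0)) = t)"

lemma phi_deriv:
  fixes x w :: "real \<times> real"
  assumes "0 \<le> c" "c < 1" "x - t *\<^sub>R w \<noteq> 0"
  shows "((\<lambda>s. N0 c (x - s *\<^sub>R w) - s) has_real_derivative (- (GN c (x - t *\<^sub>R w) \<bullet> w) - 1)) (at t)"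
proof -
  have l: "((\<lambda>s. x - s *\<^sub>R w) has_derivative (\<lambda>h. - (h *\<^sub>R w))) (at t)"
    by (auto intro!: derivative_eq_intros)
  have "((\<lambda>s. N0 c (x - s *\<^sub>R w)) has_derivative (\<lambda>h. GN c (x - t *\<^sub>R w) \<bullet> (- (h *\<^sub>R w)))) (at t)"
    using has_derivative_compose[OF l N0_deriv[OF assms]] .
  then have "((\<lambda>s. N0 c (x - s *\<^sub>R w) - s) has_derivative (\<lambda>h. GN c (x - t *\<^sub>R w) \<bullet> (- (h *\<^sub>R w)) - h)) (at t)"
    by (intro has_derivative_diff has_derivative_ident)
  then show ?thesis unfolding has_field_derivative_def
    by (rule has_derivative_eq_rhs) (auto simp: algebra_simps)
qed

lemma N0_negW: "0 \<le> c \<Longrightarrow> 0 \<le> a \<Longrightarrow> a < 1 + c \<Longrightarrow> N0 c (- (a, 0)) < 1"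
proof -
  assume c: "0 \<le> c" "0 \<le> a" "a < 1 + c"
  show ?thesis
  proof (cases "a = 0")
    case True then show ?thesis by (simp add: N0_def)
  next
    case False
    then have "a > 0" using c by simp
    have e: "a * a / (a + c * a) = a / (1 + c)" using \<open>a > 0\<close> c
    proof -
      have "a + c * a = a * (1 + c)" by algebra
      then show ?thesis using \<open>a > 0\<close> by simp
    qed
    have "N0 c (- (a, 0)) = a * a / (a + c * a)" unfolding N0_def using c \<open>a > 0\<close>
      by (simp add: norm_Pair power2_eq_square)
    then have "N0 c (- (a, 0)) = a / (1 + c)" using e by simp
    moreover have "a / (1 + c) < 1" using c by simp
    ultimately show ?thesis by simp
  qed
qed

lemma root_unique:
  assumes c: "0 \<le> c" "c < 1" "0 \<le> a" "a < 1 + c"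
    and t1: "t1 > 0" "N0 c (x - t1 *\<^sub>R (a, 0)) = t1"
    and t2: "t2 > 0" "N0 c (x - t2 *\<^sub>R (a, 0)) = t2"
  shows "t1 = t2"
proof -
  define \<phi> where "\<phi> = (\<lambda>s. N0 c (x - s *\<^sub>R (a, 0)) - s)"
  have cont: "continuous_on {0<..} \<phi>" unfolding \<phi>_def
    by (intro continuous_intros continuous_on_compose2[OF N0_continuous_on[OF c(1,2)]]) auto
  have der: "\<exists>D<0. (\<phi> has_real_derivative D) (at t)" if "t > 0" "\<phi> t = 0" for t
  proof -
    have ne: "x - t *\<^sub>R (a, 0) \<noteq> 0" using that unfolding \<phi>_def by auto
    have "1 + GN c (x - t *\<^sub>R (a, 0)) \<bullet> (a, 0) > 0" by (rule GN1_bound[OF c(1,2) ne c(3,4)])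
    then show ?thesis using phi_deriv[OF c(1,2) ne] unfolding \<phi>_def
      by (intro exI[of _ "- (GN c (x - t *\<^sub>R (a, 0)) \<bullet> (a, 0)) - 1"]) auto
  qed
  show ?thesis
  proof (rule linorder_cases[of t1 t2])
    assume "t1 < t2" then show ?thesis
      using crossing_unique[OF cont der, of t1 t2] t1 t2 unfolding \<phi>_def by auto
  next
    assume "t2 < t1" then show ?thesis
      using crossing_unique[OF cont der, of t2 t1] t1 t2 unfolding \<phi>_def by auto
  qed
qed

lemma root_exists:
  assumes c: "0 \<le> c" "c < 1" "0 \<le> a" "a < 1 + c" and x: "x \<noteq> 0"
  shows "\<exists>t>0. N0 c (x - t *\<^sub>R (a, 0)) = t"
proof -
  define w :: "real \<times> real" where "w = (a, 0)"
  define \<Phi> where "\<Phi> = (\<lambda>s. N0 c (x - s *\<^sub>R w) - s)"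
  have contP: "continuous_on UNIV \<Phi>" unfolding \<Phi>_def
    by (intro continuous_intros continuous_on_compose2[OF N0_continuous_on[OF c(1,2)]]) auto
  have "isCont \<Phi> 0" using contP by (simp add: continuous_on_eq_continuous_at)
  moreover have "\<Phi> 0 > 0" unfolding \<Phi>_def using N0_pos[OF c(1,2) x] by simp
  ultimately have "eventually (\<lambda>s. 0 < \<Phi> s) (at 0)" unfolding isCont_def by (rule order_tendstoD(1))
  then have "eventually (\<lambda>s. 0 < \<Phi> s) (at_right 0)" unfolding eventually_at_split by simp
  then obtain b where b: "b > 0" "\<And>y. y > 0 \<Longrightarrow> y < b \<Longrightarrow> 0 < \<Phi> y"
    unfolding eventually_at_right[OF zero_less_one] by auto
  define \<epsilon> where "\<epsilon> = b / 2"
  have eps: "\<epsilon> > 0" "\<Phi> \<epsilon> > 0" unfolding \<epsilon>_def using b by auto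
  define \<psi> where "\<psi> = (\<lambda>z::real. N0 c (z *\<^sub>R x - w))"
  have contQ: "continuous_on UNIV \<psi>" unfolding \<psi>_def
    by (intro continuous_intros continuous_on_compose2[OF N0_continuous_on[OF c(1,2)]]) auto
  have "isCont \<psi> 0" using contQ by (simp add: continuous_on_eq_continuous_at)
  moreover have "\<psi> 0 < 1" unfolding \<psi>_def w_def using N0_negW[OF c(1,3,4)] by simp
  ultimately have "eventually (\<lambda>s. \<psi> s < 1) (at 0)" unfolding isCont_def by (rule order_tendstoD(2))
  then have "eventually (\<lambda>s. \<psi> s < 1) (at_right 0)" unfolding eventually_at_split by simp
  then obtain b2 where b2: "b2 > 0" "\<And>y. y > 0 \<Longrightarrow> y < b2 \<Longrightarrow> \<psi> y < 1"
    unfolding eventually_at_right[OF zero_less_one] by auto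
  obtain mm where mm: "mm > 0" "mm \<le> b2" "mm \<le> 1 / \<epsilon>"
    using b2 eps by (intro that[of "min b2 (1 / \<epsilon>)"]) auto
  obtain z where z: "z > 0" "z < b2" "z < 1 / \<epsilon>"
    using mm by (intro that[of "mm / 2"]) auto
  define T where "T = 1 / z"
  have T: "T > \<epsilon>" unfolding T_def using z eps by (simp add: field_simps)
  have Tz: "T * z = 1" unfolding T_def using z by simp
  have "x - T *\<^sub>R w = T *\<^sub>R (z *\<^sub>R x - w)" using Tz by (simp add: algebra_simps)
  then have "\<Phi> T = T * \<psi> z - T" unfolding \<Phi>_def \<psi>_def using N0_hom[of T c] T eps by simp
  also have "\<dots> < 0" using b2(2)[OF z(1,2)] T eps by (simp add: algebra_simps)
  finally have PT: "\<Phi> T < 0" .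
  obtain t where t: "t \<ge> \<epsilon>" "t \<le> T" "\<Phi> t = 0"
    using IVT2'[of \<Phi> T 0 \<epsilon>] PT eps T continuous_on_subset[OF contP] by fastforce
  then show ?thesis using eps unfolding \<Phi>_def w_def by (intro exI[of _ t]) auto
qed

lemma root_ex1:
  assumes c: "0 \<le> c" "c < 1" "0 \<le> a" "a < 1 + c" and x: "x \<noteq> 0"
  shows "\<exists>!t. t > 0 \<and> N0 c (x - t *\<^sub>R (a, 0)) = t"
  using root_exists[OF assms] root_unique[OF c] by blast

lemma S0_root:
  assumes c: "0 \<le> c" "c < 1" "0 \<le> a" "a < 1 + c" and x: "x \<noteq> 0"
  shows "S0 a c x > 0 \<and> N0 c (x - S0 a c x *\<^sub>R (a, 0)) = S0 a c x"
  unfolding S0_def by (rule theI'[OF root_ex1[OF assms]])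

lemma S0_eq:
  assumes c: "0 \<le> c" "c < 1" "0 \<le> a" "a < 1 + c" and t: "t > 0" "N0 c (x - t *\<^sub>R (a, 0)) = t"
  shows "S0 a c x = t"
  unfolding S0_def
proof (rule the_equality)
  show "t > 0 \<and> N0 c (x - t *\<^sub>R (a, 0)) = t" using t by simp
  fix s assume "s > 0 \<and> N0 c (x - s *\<^sub>R (a, 0)) = s"
  then show "s = t" using root_unique[OF c, of s x t] t by blast
qed

locale canon =
  fixes a c :: real
  assumes c0: "0 \<le> c" and c1: "c < 1" and a0: "0 \<le> a" and a1: "a < 1 + c"
begin

definition w :: "real \<times> real" where "w = (a, 0)"
definition Gam where "Gam u = u + N0 c u *\<^sub>R w"
definition gI where "gI y = y - S0 a c y *\<^sub>R w"
definition dd where "dd u = 1 + GN c u \<bullet> w"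
definition Lam where "Lam u = (2 * N0 c u / dd u) *\<^sub>R GN c u"
definition gI' where "gI' u k = k - ((GN c u \<bullet> k) / dd u) *\<^sub>R w"
definition DLam where "DLam u v = ((2 * (GN c u \<bullet> v) * dd u - 2 * N0 c u * (DGN c u v \<bullet> w)) / (dd u)^2) *\<^sub>R GN c u
    + (2 * N0 c u / dd u) *\<^sub>R DGN c u v"

lemmas cc = c0 c1 a0 a1

lemma dd_pos: "u \<noteq> 0 \<Longrightarrow> dd u > 0"
  unfolding dd_def w_def using GN1_bound[OF c0 c1 _ a0 a1] by simp

lemma S0_props: "y \<noteq> 0 \<Longrightarrow> S0 a c y > 0 \<and> N0 c (gI y) = S0 a c y"
  using S0_root[OF cc] unfolding gI_def w_def by blast

lemma gI_ne: "y \<noteq> 0 \<Longrightarrow> gI y \<noteq> 0"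
  using S0_props[of y] by auto

lemma Gam_gI: "y \<noteq> 0 \<Longrightarrow> Gam (gI y) = y"
  using S0_props[of y] unfolding Gam_def gI_def by simp

lemma gI_Gam: "u \<noteq> 0 \<Longrightarrow> gI (Gam u) = u"
proof -
  assume u: "u \<noteq> 0"
  have "S0 a c (Gam u) = N0 c u"
    by (rule S0_eq[OF cc]) (use N0_pos[OF c0 c1 u] in \<open>auto simp: Gam_def w_def\<close>)
  then show ?thesis unfolding gI_def Gam_def by simp
qed

lemma Gam_cont: "continuous_on (- {0}) Gam"
  unfolding Gam_def by (intro continuous_intros N0_continuous_on[OF c0 c1])

lemma Gam_deriv: "u \<noteq> 0 \<Longrightarrow> (Gam has_derivative (\<lambda>k. k + (GN c u \<bullet> k) *\<^sub>R w)) (at u)"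
  unfolding Gam_def
  by (rule derivative_eq_intros N0_deriv[OF c0 c1] refl | assumption)+

lemma gI_deriv:
  assumes y: "y \<noteq> 0"
  shows "(gI has_derivative gI' (gI y)) (at y)"
proof -
  define u where "u = gI y"
  have u: "u \<noteq> 0" unfolding u_def by (rule gI_ne[OF y])
  have d: "dd u > 0" by (rule dd_pos[OF u])
  have "(gI has_derivative gI' u) (at (Gam u))"
  proof (rule has_derivative_inverse_strong[of "- {0}" u Gam])
    show "open (- {0::real\<times>real})" by auto
    show "u \<in> - {0}" using u by simp
    show "continuous_on (- {0}) Gam" by (rule Gam_cont)
    show "\<And>x. x \<in> - {0} \<Longrightarrow> gI (Gam x) = x" using gI_Gam by simp
    show "(Gam has_derivative (\<lambda>k. k + (GN c u \<bullet> k) *\<^sub>R w)) (at u)" by (rule Gam_deriv[OF u])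
    show "(\<lambda>k. k + (GN c u \<bullet> k) *\<^sub>R w) \<circ> gI' u = id"
    proof
      fix k
      have "GN c u \<bullet> gI' u k = (GN c u \<bullet> k) / dd u"
        unfolding gI'_def using d by (simp add: inner_diff_right dd_def field_simps)
      then show "((\<lambda>k. k + (GN c u \<bullet> k) *\<^sub>R w) \<circ> gI' u) k = id k"
        unfolding gI'_def by simp
    qed
  qed
  then show ?thesis using Gam_gI[OF y] unfolding u_def by simp
qed

lemma L_deriv:
  assumes y: "y \<noteq> 0"
  shows "((\<lambda>z. (S0 a c z)^2) has_derivative (\<lambda>k. Lam (gI y) \<bullet> k)) (at y)"
proof -
  define u where "u = gI y"
  have u: "u \<noteq> 0" unfolding u_def by (rule gI_ne[OF y])
  have d: "dd u > 0" by (rule dd_pos[OF u])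
  have h1: "((\<lambda>z. N0 c (gI z)) has_derivative (\<lambda>k. GN c u \<bullet> gI' u k)) (at y)"
    using has_derivative_compose[OF gI_deriv[OF y] N0_deriv[OF c0 c1 u[unfolded u_def]]] unfolding u_def .
  have h2: "((\<lambda>z. (N0 c (gI z))^2) has_derivative (\<lambda>k. Lam u \<bullet> k)) (at y)"
    apply (rule derivative_eq_intros h1 refl)+
    apply (rule ext)
    subgoal for k
      unfolding Lam_def gI'_def u_def[symmetric] using d
      by (simp add: inner_diff_right dd_def field_simps)
    done
  show ?thesis
  proof (rule has_derivative_transform_within_open[OF h2[unfolded u_def]])
    show "open (- {0::real\<times>real})" by auto
    show "y \<in> - {0}" using y by simp
    show "\<And>x. x \<in> - {0} \<Longrightarrow> (N0 c (gI x))\<^sup>2 = (S0 a c x)\<^sup>2" using S0_props by simp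
  qed
qed

lemma Lam_deriv:
  assumes u: "u \<noteq> 0"
  shows "(Lam has_derivative DLam u) (at u)"
proof -
  have d: "dd u > 0" by (rule dd_pos[OF u])
  have hn: "((\<lambda>x. 2 * N0 c x) has_derivative (\<lambda>v. 2 * (GN c u \<bullet> v))) (at u)"
    using has_derivative_mult_right[OF N0_deriv[OF c0 c1 u], of 2] .
  have hd: "(dd has_derivative (\<lambda>v. DGN c u v \<bullet> w)) (at u)"
    unfolding dd_def[abs_def]
    using has_derivative_add[OF has_derivative_const[of 1] has_derivative_inner[OF GN_deriv[OF c0 c1 u] has_derivative_const[of w]]]
    by simp
  have hq: "((\<lambda>x. 2 * N0 c x / dd x) has_derivative
     (\<lambda>h. - (2 * N0 c u) * (inverse (dd u) * (DGN c u h \<bullet> w) * inverse (dd u)) + 2 * (GN c u \<bullet> h) / dd u)) (at u)"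
    using has_derivative_divide[OF hn hd] d by simp
  have "(Lam has_derivative (\<lambda>h. (2 * N0 c u / dd u) *\<^sub>R DGN c u h +
      (- (2 * N0 c u) * (inverse (dd u) * (DGN c u h \<bullet> w) * inverse (dd u)) + 2 * (GN c u \<bullet> h) / dd u) *\<^sub>R GN c u)) (at u)"
    unfolding Lam_def[abs_def] using has_derivative_scaleR[OF hq GN_deriv[OF c0 c1 u]] .
  then show ?thesis
    apply (rule has_derivative_eq_rhs)
    apply (rule ext)
    subgoal for v
      unfolding DLam_def using d
      by (simp add: field_simps power2_eq_square)
    done
qed

lemma grad_deriv:
  assumes y: "y \<noteq> 0"
  shows "((\<lambda>z. Lam (gI z)) has_derivative (\<lambda>k. DLam (gI y) (gI' (gI y) k))) (at y)"
  using has_derivative_compose[OF gI_deriv[OF y] Lam_deriv[OF gI_ne[OF y]]] .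

lemma Hform:
  assumes u: "u \<noteq> 0"
  shows "DLam u (gI' u k) \<bullet> k = 2 * (GN c u \<bullet> k)^2 / (dd u)^2
     + (2 * N0 c u / dd u) * (DGN c u (gI' u k) \<bullet> gI' u k)"
proof -
  have d: "dd u > 0" by (rule dd_pos[OF u])
  define v where "v = gI' u k"
  define X where "X = DGN c u v"
  have gv: "GN c u \<bullet> v = (GN c u \<bullet> k) / dd u"
    unfolding v_def gI'_def using d by (simp add: inner_diff_right dd_def field_simps)
  have xv: "X \<bullet> v = X \<bullet> k - ((GN c u \<bullet> k) / dd u) * (X \<bullet> w)"
    unfolding v_def gI'_def by (simp add: inner_diff_right)
  show ?thesis
    unfolding v_def[symmetric] X_def[symmetric] unfolding DLam_def X_def[symmetric]
    unfolding inner_add_left inner_scaleR_left gv xv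
    using d by (simp add: field_simps power2_eq_square)
qed

lemma cross_zero:
  fixes u k g :: "real \<times> real"
  assumes "fst u * snd k - snd u * fst k = 0"
  shows "(g \<bullet> k) *\<^sub>R u = (g \<bullet> u) *\<^sub>R k"
proof -
  obtain u1 u2 where u: "u = (u1, u2)" by (cases u)
  obtain k1 k2 where k: "k = (k1, k2)" by (cases k)
  obtain g1 g2 where g: "g = (g1, g2)" by (cases g)
  have e: "u1 * k2 = u2 * k1" using assms unfolding u k by simp
  have "(g1 * k1 + g2 * k2) * u1 = (g1 * u1 + g2 * u2) * k1"
    using e by (simp add: algebra_simps)
  moreover have "(g1 * k1 + g2 * k2) * u2 = (g1 * u1 + g2 * u2) * k2"
    using e by (simp add: algebra_simps)
  ultimately show ?thesis unfolding u k g by (simp add: inner_Pair)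
qed

lemma Q_nonneg_factor:
  fixes u :: "real \<times> real"
  assumes "c < 1/2" "u \<noteq> 0"
  shows "norm u * (1 + 2 * c^2) - 3 * c * fst u > 0"
proof -
  have "c * fst u \<le> c * norm u" using fst_le_norm[of u] c0
    by (meson abs_ge_self mult_left_mono order_trans)
  moreover have "norm u * (1 + 2 * c^2) - 3 * c * norm u = norm u * ((1 - c) * (1 - 2 * c))"
    by (simp add: algebra_simps power2_eq_square)
  moreover have "norm u * ((1 - c) * (1 - 2 * c)) > 0" using assms c1 by simp
  ultimately show ?thesis by linarith
qed

theorem canon_PD:
  assumes ch: "c < 1/2" and y: "y \<noteq> 0"
  shows "hessian_posdef (\<lambda>z. (S0 a c z)^2) y"
proof -
  have "eventually (\<lambda>z. z \<in> - {0}) (nhds y)" using y by (intro eventually_nhds_in_open) auto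
  then have E: "\<forall>\<^sub>F z in nhds y. ((\<lambda>z. (S0 a c z)\<^sup>2) has_derivative (\<lambda>k. Lam (gI z) \<bullet> k)) (at z)"
    by (rule eventually_mono) (use L_deriv in auto)
  have G: "((\<lambda>z. Lam (gI z)) has_derivative (\<lambda>k. DLam (gI y) (gI' (gI y) k))) (at y)"
    by (rule grad_deriv[OF y])
  have P: "DLam (gI y) (gI' (gI y) k) \<bullet> k > 0" if k: "k \<noteq> 0" for k
  proof -
  define u where "u = gI y"
  have u: "u \<noteq> 0" unfolding u_def by (rule gI_ne[OF y])
  have d: "dd u > 0" by (rule dd_pos[OF u])
  have n: "N0 c u > 0" by (rule N0_pos[OF c0 c1 u])
  have D: "norm u - c * fst u > 0" by (rule den_pos[OF c0 c1 u])
  have r: "norm u > 0" using u by simp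
  have F: "norm u * (1 + 2 * c^2) - 3 * c * fst u > 0" by (rule Q_nonneg_factor[OF ch u])
  have Qnn: "DGN c u v \<bullet> v \<ge> 0" for v
    unfolding DGN_Q[OF c0 c1 u] using F D r by (intro divide_nonneg_pos mult_nonneg_nonneg) auto
  have H: "DLam u (gI' u k) \<bullet> k = 2 * (GN c u \<bullet> k)^2 / (dd u)^2
     + (2 * N0 c u / dd u) * (DGN c u (gI' u k) \<bullet> gI' u k)" by (rule Hform[OF u])
  have t2: "(2 * N0 c u / dd u) * (DGN c u (gI' u k) \<bullet> gI' u k) \<ge> 0"
    using Qnn n d by simp
  show "DLam (gI y) (gI' (gI y) k) \<bullet> k > 0"
  proof (cases "GN c u \<bullet> k = 0")
    case False
    then have "2 * (GN c u \<bullet> k)^2 / (dd u)^2 > 0" using d by simp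
    then show ?thesis using H t2 unfolding u_def by linarith
  next
    case True
    then have v: "gI' u k = k" unfolding gI'_def by simp
    have "fst u * snd k - snd u * fst k \<noteq> 0"
    proof
      assume "fst u * snd k - snd u * fst k = 0"
      from cross_zero[OF this, of "GN c u"] True GN_euler[OF c0 c1 u]
      have "N0 c u *\<^sub>R k = 0" by simp
      then show False using n k by simp
    qed
    then have "DGN c u k \<bullet> k > 0"
      unfolding DGN_Q[OF c0 c1 u] using F D r by (intro divide_pos_pos mult_pos_pos) auto
    then have "(2 * N0 c u / dd u) * (DGN c u (gI' u k) \<bullet> gI' u k) > 0"
      using n d v by simp
    then show ?thesis using H True unfolding u_def by simp
  qed
  qed
  show ?thesis unfolding hessian_posdef_def
    apply (rule exI[of _ "\<lambda>z. Lam (gI z)"])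
    apply (rule exI[of _ "\<lambda>k. DLam (gI y) (gI' (gI y) k)"])
    using E G P by auto
qed

lemma inner_ext: fixes p q :: "real \<times> real" shows "(\<lambda>k. p \<bullet> k) = (\<lambda>k. q \<bullet> k) \<Longrightarrow> p = q"
proof -
  assume "(\<lambda>k. p \<bullet> k) = (\<lambda>k. q \<bullet> k)"
  then have "p \<bullet> (p - q) = q \<bullet> (p - q)" by metis
  then have "(p - q) \<bullet> (p - q) = 0" by (simp add: inner_diff_left)
  then show "p = q" by simp
qed

theorem canon_notPD:
  assumes ch: "1/2 \<le> c"
  shows "\<not> hessian_posdef (\<lambda>z. (S0 a c z)^2) (1 - c + a, 0)"
proof
  define x0 :: "real \<times> real" where "x0 = (1 - c + a, 0)"
  define u0 :: "real \<times> real" where "u0 = (1 - c, 0)"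
  assume "hessian_posdef (\<lambda>z. (S0 a c z)^2) (1 - c + a, 0)"
  then obtain grad H where E': "\<forall>\<^sub>F z in nhds x0. ((\<lambda>z. (S0 a c z)\<^sup>2) has_derivative (\<lambda>k. grad z \<bullet> k)) (at z)"
    and G': "(grad has_derivative H) (at x0)" and P': "\<And>k. k \<noteq> 0 \<Longrightarrow> H k \<bullet> k > 0"
    unfolding hessian_posdef_def x0_def by blast
  have x0: "x0 \<noteq> 0" unfolding x0_def using c1 a0 by (simp add: zero_prod_def)
  have nu0: "norm u0 = 1 - c" unfolding u0_def using c1 by (simp add: norm_Pair)
  have "N0 c (x0 - 1 *\<^sub>R (a, 0)) = 1"
  proof -
    have "x0 - 1 *\<^sub>R (a, 0) = u0" unfolding x0_def u0_def by simp
    moreover have "(1 - c) - c * (1 - c) = (1 - c)^2" by (simp add: power2_eq_square algebra_simps)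
    ultimately show ?thesis unfolding N0_def using nu0 c1 by (simp add: u0_def)
  qed
  then have S1: "S0 a c x0 = 1" by (intro S0_eq[OF cc]) auto
  have gu: "gI x0 = u0" unfolding gI_def S1 unfolding w_def x0_def u0_def by simp
  have u0: "u0 \<noteq> 0" unfolding u0_def using c1 by (simp add: zero_prod_def)
  have "eventually (\<lambda>z. z \<in> - {0}) (nhds x0)" using x0 by (intro eventually_nhds_in_open) auto
  with E' have "eventually (\<lambda>z. grad z = Lam (gI z)) (nhds x0)"
  proof (rule eventually_elim2)
    fix z assume dz: "((\<lambda>z. (S0 a c z)\<^sup>2) has_derivative (\<lambda>k. grad z \<bullet> k)) (at z)" and z: "z \<in> - {0}"
    then have "(\<lambda>k. grad z \<bullet> k) = (\<lambda>k. Lam (gI z) \<bullet> k)"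
      using has_derivative_unique[OF dz L_deriv] by simp
    then show "grad z = Lam (gI z)" by (rule inner_ext)
  qed
  then obtain S where S: "open S" "x0 \<in> S" "\<And>z. z \<in> S \<Longrightarrow> grad z = Lam (gI z)"
    unfolding eventually_nhds by blast
  have "((\<lambda>z. Lam (gI z)) has_derivative H) (at x0)"
    by (rule has_derivative_transform_within_open[OF G' S(1,2)]) (use S(3) in auto)
  then have HH: "H = (\<lambda>k. DLam u0 (gI' u0 k))"
    using has_derivative_unique[OF _ grad_deriv[OF x0]] gu by simp
  define k :: "real \<times> real" where "k = (0, 1)"
  have k: "k \<noteq> 0" unfolding k_def by (simp add: zero_prod_def)
  have d: "dd u0 > 0" by (rule dd_pos[OF u0])
  have n: "N0 c u0 > 0" by (rule N0_pos[OF c0 c1 u0])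
  have g0: "GN c u0 \<bullet> k = 0" unfolding GN_def k_def u0_def by (simp add: inner_Pair)
  then have v: "gI' u0 k = k" unfolding gI'_def by simp
  have q: "DGN c u0 k \<bullet> k \<le> 0"
  proof -
    have e: "DGN c u0 k \<bullet> k = (1 - c)^2 * ((1 - c) * (1 + 2 * c^2) - 3 * c * (1 - c)) / ((1 - c) * ((1 - c) - c * (1 - c))^3)"
      unfolding DGN_Q[OF c0 c1 u0] nu0 by (simp add: u0_def k_def)
    have "(1 - c) * (1 + 2 * c^2) - 3 * c * (1 - c) = (1 - c) * ((1 - c) * (1 - 2 * c))"
      by (simp add: algebra_simps power2_eq_square)
    moreover have "(1 - c) * ((1 - c) * (1 - 2 * c)) \<le> 0" using ch c1
      by (intro mult_nonneg_nonpos) auto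
    moreover have "(1 - c) - c * (1 - c) = (1 - c)^2" by (simp add: power2_eq_square algebra_simps)
    ultimately show ?thesis unfolding e using c1
      by (intro divide_nonpos_pos mult_nonneg_nonpos) auto
  qed
  have "H k \<bullet> k = 2 * (GN c u0 \<bullet> k)^2 / (dd u0)^2 + (2 * N0 c u0 / dd u0) * (DGN c u0 (gI' u0 k) \<bullet> gI' u0 k)"
    unfolding HH by (rule Hform[OF u0])
  also have "\<dots> \<le> 0" unfolding g0 v using q n d
    by (simp add: mult_nonneg_nonpos divide_nonpos_pos)
  finally show False using P'[OF k] by simp
qed

end

lemma hess_transfer:
  fixes A :: "real \<times> real \<Rightarrow> real \<times> real"
  assumes lin: "linear A" and inj: "inj A" and hp: "hessian_posdef L (A x)"
  shows "hessian_posdef (\<lambda>z. L (A z)) x"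
proof -
  obtain grad H where E: "\<forall>\<^sub>F z in nhds (A x). (L has_derivative (\<lambda>k. grad z \<bullet> k)) (at z)"
    and G: "(grad has_derivative H) (at (A x))" and P: "\<And>k. k \<noteq> 0 \<Longrightarrow> H k \<bullet> k > 0"
    using hp unfolding hessian_posdef_def by blast
  have bl: "bounded_linear A" using lin by (simp add: linear_conv_bounded_linear)
  have dA: "\<And>z. (A has_derivative A) (at z)" using bl by (rule bounded_linear_imp_has_derivative)
  have linT: "linear (adjoint A)" using lin by (rule adjoint_linear)
  have blT: "bounded_linear (adjoint A)" using linT by (simp add: linear_conv_bounded_linear)
  have dT: "\<And>z. (adjoint A has_derivative adjoint A) (at z)" using blT by (rule bounded_linear_imp_has_derivative)
  have contA: "continuous_on UNIV A" using bl by (simp add: linear_continuous_on)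
  obtain S where S: "open S" "A x \<in> S" "\<And>y. y \<in> S \<Longrightarrow> (L has_derivative (\<lambda>k. grad y \<bullet> k)) (at y)"
    using E unfolding eventually_nhds by blast
  have "open (A -` S)" using contA S(1) by (simp add: continuous_on_open_vimage)
  then have E2: "\<forall>\<^sub>F z in nhds x. ((\<lambda>z. L (A z)) has_derivative (\<lambda>k. adjoint A (grad (A z)) \<bullet> k)) (at z)"
    unfolding eventually_nhds
  proof (intro exI[of _ "A -` S"] conjI ballI)
    show "x \<in> A -` S" using S(2) by simp
    fix z assume "z \<in> A -` S"
    then have "(L has_derivative (\<lambda>k. grad (A z) \<bullet> k)) (at (A z))" using S(3) by simp
    from has_derivative_compose[OF dA this]
    have "((\<lambda>z. L (A z)) has_derivative (\<lambda>k. grad (A z) \<bullet> A k)) (at z)" .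
    moreover have "(\<lambda>k. grad (A z) \<bullet> A k) = (\<lambda>k. adjoint A (grad (A z)) \<bullet> k)"
      using adjoint_works[OF lin] by (simp add: inner_commute)
    ultimately show "((\<lambda>z. L (A z)) has_derivative (\<lambda>k. adjoint A (grad (A z)) \<bullet> k)) (at z)" by simp
  qed (rule \<open>open (A -` S)\<close>)
  have G2: "((\<lambda>z. adjoint A (grad (A z))) has_derivative (\<lambda>k. adjoint A (H (A k)))) (at x)"
    using has_derivative_compose[OF has_derivative_compose[OF dA G] dT] .
  have P2: "adjoint A (H (A k)) \<bullet> k > 0" if k: "k \<noteq> 0" for k
  proof -
    have "A k \<noteq> 0" using inj k lin by (metis injD linear_0)
    then have "H (A k) \<bullet> A k > 0" by (rule P)
    then show ?thesis using adjoint_works[OF lin, of k "H (A k)"] by (simp add: inner_commute)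
  qed
  show ?thesis unfolding hessian_posdef_def
    apply (rule exI[of _ "\<lambda>z. adjoint A (grad (A z))"])
    apply (rule exI[of _ "\<lambda>k. adjoint A (H (A k))"])
    using E2 G2 P2 by auto
qed

definition E1 :: "real \<times> real \<Rightarrow> real \<times> real" where
  "E1 p = (if gauss_q p = 0 then (1, 0) else
     (- gauss_fx p / (sqrt (gauss_q p) * sqrt (1 + gauss_q p)), - gauss_fy p / (sqrt (gauss_q p) * sqrt (1 + gauss_q p))))"
definition E2 :: "real \<times> real \<Rightarrow> real \<times> real" where
  "E2 p = (if gauss_q p = 0 then (0, 1) else (- gauss_fy p / sqrt (gauss_q p), gauss_fx p / sqrt (gauss_q p)))"
definition TT :: "real \<times> real \<Rightarrow> real \<times> real \<Rightarrow> real \<times> real" where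
  "TT p x = fst x *\<^sub>R E1 p + snd x *\<^sub>R E2 p"
definition TI :: "real \<times> real \<Rightarrow> real \<times> real \<Rightarrow> real \<times> real" where
  "TI p y = (hmet p y (E1 p), hmet p y (E2 p))"
definition aa :: "real \<Rightarrow> real \<times> real \<Rightarrow> real" where
  "aa gbar p = gbar * sqrt (gauss_q p) / sqrt (1 + gauss_q p)"

lemma hmet_lin1: "hmet p (s *\<^sub>R u + t *\<^sub>R v) z = s * hmet p u z + t * hmet p v z"
  unfolding hmet_def by (simp add: algebra_simps)
lemma hmet_sym: "hmet p u v = hmet p v u"
  unfolding hmet_def by (simp add: algebra_simps)
lemma hmet_lin2: "hmet p z (s *\<^sub>R u + t *\<^sub>R v) = s * hmet p z u + t * hmet p z v"
  using hmet_lin1 hmet_sym by metis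

lemma q_nonneg: "gauss_q p \<ge> 0" unfolding gauss_q_def by simp

lemma hE:
  "hmet p (E1 p) (E1 p) = 1" "hmet p (E1 p) (E2 p) = 0" "hmet p (E2 p) (E1 p) = 0" "hmet p (E2 p) (E2 p) = 1"
proof -
  define P1 where "P1 = gauss_fx p"
  define P2 where "P2 = gauss_fy p"
  define q where "q = gauss_q p"
  have q: "q = P1^2 + P2^2" unfolding q_def P1_def P2_def gauss_q_def by simp
  have q0: "q \<ge> 0" unfolding q_def by (rule q_nonneg)
  have "hmet p (E1 p) (E1 p) = 1 \<and> hmet p (E1 p) (E2 p) = 0 \<and> hmet p (E2 p) (E1 p) = 0 \<and> hmet p (E2 p) (E2 p) = 1"
  proof (cases "q = 0")
    case True
    then have "P1 = 0" "P2 = 0" using q by (auto simp: add_nonneg_eq_0_iff)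
    then show ?thesis using True unfolding E1_def E2_def hmet_def q_def[symmetric] P1_def[symmetric] P2_def[symmetric]
      by simp
  next
    case False
    then have qp: "q > 0" using q0 by simp
    define s where "s = sqrt q"
    define m where "m = sqrt (1 + q)"
    have s: "s > 0" "s^2 = q" unfolding s_def using qp by auto
    have m: "m > 0" "m^2 = 1 + q" unfolding m_def using q0 by auto
    have e1: "E1 p = (- P1 / (s * m), - P2 / (s * m))" unfolding E1_def using False
      unfolding q_def[symmetric] P1_def[symmetric] P2_def[symmetric] s_def m_def by simp
    have e2: "E2 p = (- P2 / s, P1 / s)" unfolding E2_def using False
      unfolding q_def[symmetric] P1_def[symmetric] P2_def[symmetric] s_def by simp
    have hm: "hmet p u v = fst u * fst v + snd u * snd v + (P1 * fst u + P2 * snd u) * (P1 * fst v + P2 * snd v)" for u v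
      unfolding hmet_def P1_def P2_def by simp
    have A: "hmet p (E1 p) (E1 p) = 1"
    proof -
      have "hmet p (E1 p) (E1 p) = (P1^2 + P2^2) / (s^2 * m^2) + (P1^2 + P2^2)^2 / (s^2 * m^2)"
        unfolding hm e1 using s(1) m(1) by (simp add: field_simps power2_eq_square)
      also have "\<dots> = (q + q^2) / (q * (1 + q))" unfolding s(2) m(2) q[symmetric] by (simp add: add_divide_distrib)
      also have "\<dots> = 1"
      proof -
        have "q * (1 + q) > 0" using qp by simp
        moreover have "q + q^2 = q * (1 + q)" by (simp add: power2_eq_square algebra_simps)
        ultimately show ?thesis by (metis divide_self less_irrefl)
      qed
      finally show ?thesis .
    qed
    have B: "hmet p (E1 p) (E2 p) = 0"
      unfolding hm e1 e2 using s m by (simp add: field_simps power2_eq_square)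
    have C: "hmet p (E2 p) (E2 p) = 1"
    proof -
      have "hmet p (E2 p) (E2 p) = (P1^2 + P2^2) / s^2"
        unfolding hm e2 using s(1) m(1) by (simp add: field_simps power2_eq_square)
      also have "\<dots> = 1" unfolding s(2) q[symmetric] using qp by simp
      finally show ?thesis .
    qed
    show ?thesis using A B C hmet_sym by metis
  qed
  then show "hmet p (E1 p) (E1 p) = 1" "hmet p (E1 p) (E2 p) = 0" "hmet p (E2 p) (E1 p) = 0" "hmet p (E2 p) (E2 p) = 1"
    by auto
qed

lemma hmet_TT: "hmet p (TT p x) (TT p y) = fst x * fst y + snd x * snd y"
  unfolding TT_def hmet_lin1 hmet_lin2 hE by simp

lemma wind_TT:
  assumes "gbar > 0"
  shows "wind gbar p = TT p (aa gbar p, 0)"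
proof -
  define P1 where "P1 = gauss_fx p"
  define P2 where "P2 = gauss_fy p"
  define q where "q = gauss_q p"
  have q: "q = P1^2 + P2^2" unfolding q_def P1_def P2_def gauss_q_def by simp
  have q0: "q \<ge> 0" unfolding q_def by (rule q_nonneg)
  show ?thesis
  proof (cases "q = 0")
    case True
    then have "P1 = 0" "P2 = 0" using q by (auto simp: add_nonneg_eq_0_iff)
    then show ?thesis using True unfolding TT_def E1_def E2_def wind_def aa_def q_def[symmetric] P1_def[symmetric] P2_def[symmetric]
      by simp
  next
    case False
    then have qp: "q > 0" using q0 by simp
    define s where "s = sqrt q"
    define m where "m = sqrt (1 + q)"
    have s: "s > 0" "s^2 = q" unfolding s_def using qp by auto
    have m: "m > 0" "m^2 = 1 + q" unfolding m_def using q0 by auto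
    have e1: "E1 p = (- P1 / (s * m), - P2 / (s * m))" unfolding E1_def using False
      unfolding q_def[symmetric] P1_def[symmetric] P2_def[symmetric] s_def m_def by simp
    have "aa gbar p = gbar * s / m" unfolding aa_def s_def m_def q_def by simp
    then show ?thesis unfolding TT_def e1 wind_def q_def[symmetric] P1_def[symmetric] P2_def[symmetric]
      using s m by (simp add: field_simps power2_eq_square m(2)[symmetric])
  qed
qed

lemma TT_linear: "linear (TT p)"
  unfolding TT_def by (intro linearI) (auto simp: algebra_simps)

lemma TI_TT: "TI p (TT p x) = x"
proof -
  have "hmet p (TT p x) (E1 p) = fst x" "hmet p (TT p x) (E2 p) = snd x"
    unfolding TT_def hmet_lin1 hE by simp_all
  then show ?thesis unfolding TI_def by simp
qed

lemma TT_inj: "inj (TT p)"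
  by (metis TI_TT injI)

lemma TT_TI: "TT p (TI p y) = y"
proof -
  have "surj (TT p)" by (rule eucl.linear_inj_imp_surj[OF TT_linear TT_inj])
  then obtain x where "y = TT p x" by blast
  then show ?thesis using TI_TT by simp
qed

lemma TI_linear: "linear (TI p)"
  unfolding TI_def hmet_def by (intro linearI) (auto simp: algebra_simps)

lemma TI_inj: "inj (TI p)"
  by (metis TT_TI injI)

lemma alpha_TT: "alpha p (TT p z) = norm z"
  unfolding alpha_def hmet_TT by (cases z) (simp add: norm_Pair power2_eq_square)

lemma beta_TT: "gbar > 0 \<Longrightarrow> gbar * beta gbar p (TT p z) = - (aa gbar p * fst z)"
  unfolding beta_def using wind_TT[of gbar p] hmet_TT[of p z "(aa gbar p, 0)"] by simp

lemma Fbase_TT: "gbar > 0 \<Longrightarrow> Fbase gbar eta p (TT p z) = N0 (eta * aa gbar p) z"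
proof -
  assume g: "gbar > 0"
  have "eta * gbar * beta gbar p (TT p z) = - (eta * aa gbar p * fst z)"
    using beta_TT[OF g, of p z] by (simp add: algebra_simps)
  then show ?thesis unfolding Fbase_def N0_def alpha_TT by simp
qed

lemma TT_diff: "TT p x - t *\<^sub>R TT p y = TT p (x - t *\<^sub>R y)"
  unfolding TT_def by (simp add: algebra_simps)

lemma Fbase_TT_wind: "gbar > 0 \<Longrightarrow>
   Fbase gbar eta p (TT p x - t *\<^sub>R wind gbar p) = N0 (eta * aa gbar p) (x - t *\<^sub>R (aa gbar p, 0))"
  using wind_TT[of gbar p] TT_diff Fbase_TT by metis

lemma slippery_TT: "gbar > 0 \<Longrightarrow> slippery gbar eta p (TT p x) = S0 (aa gbar p) (eta * aa gbar p) x"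
  unfolding slippery_def S0_def using Fbase_TT_wind by simp

lemma N0_neg_axis: "0 \<le> c \<Longrightarrow> v < 0 \<Longrightarrow> N0 c (v, 0) = - v / (1 + c)"
proof -
  assume c: "0 \<le> c" "v < 0"
  have "norm (v, 0::real) = - v" using c by (simp add: norm_Pair)
  moreover have "- v - c * v = (- v) * (1 + c)" by (simp add: algebra_simps)
  ultimately have "N0 c (v, 0) = (- v) * (- v) / ((- v) * (1 + c))" unfolding N0_def by (simp add: power2_eq_square)
  also have "\<dots> = - v / (1 + c)" using c by simp
  finally show ?thesis .
qed

lemma no_root_C5:
  assumes c: "0 \<le> c" "0 \<le> a" "1 + c \<le> a"
  shows "\<not> (\<exists>t>0. N0 c ((-1, 0) - t *\<^sub>R (a, 0)) = t)"
proof
  assume "\<exists>t>0. N0 c ((-1, 0) - t *\<^sub>R (a, 0)) = t"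
  then obtain t where t: "t > 0" "N0 c ((-1, 0) - t *\<^sub>R (a, 0)) = t" by blast
  have "(-1, 0) - t *\<^sub>R (a, 0) = (- 1 - t * a, 0::real)" by simp
  moreover have "- 1 - t * a < 0" using t c by (smt (verit) mult_nonneg_nonneg)
  moreover have "- (- 1 - t * a) = 1 + t * a" by simp
  ultimately have "N0 c ((-1, 0) - t *\<^sub>R (a, 0)) = (1 + t * a) / (1 + c)" using N0_neg_axis[OF c(1), of "- 1 - t * a"]
    by metis
  then have "1 + t * a = t * (1 + c)" using t c by (simp add: field_simps)
  moreover have "t * (1 + c) \<le> t * a" using t c by simp
  ultimately show False by simp
qed

lemma no_root_C4:
  assumes c: "1 \<le> c" "0 \<le> a" "a < 1 + c"
  shows "\<not> (\<exists>t>0. N0 c ((1, 0) - t *\<^sub>R (a, 0)) = t)"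
proof
  assume "\<exists>t>0. N0 c ((1, 0) - t *\<^sub>R (a, 0)) = t"
  then obtain t where t: "t > 0" "N0 c ((1, 0) - t *\<^sub>R (a, 0)) = t" by blast
  define v where "v = 1 - t * a"
  have e: "(1, 0) - t *\<^sub>R (a, 0) = (v, 0::real)" unfolding v_def by simp
  consider "v < 0" | "v = 0" | "v > 0" by linarith
  then show False
  proof cases
    case 1
    then have "N0 c (v, 0) = - v / (1 + c)" using N0_neg_axis c by simp
    moreover have "N0 c (v, 0) = t" using t e by simp
    ultimately have "- v = t * (1 + c)" using c by (simp add: field_simps)
    then have "t * a - 1 = t * (1 + c)" unfolding v_def by simp
    moreover have "t * a < t * (1 + c)" using t c by simp
    ultimately show False by simp
  next
    case 2 then show False using t e by (simp add: N0_def)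
  next
    case 3
    have "norm (v, 0::real) = v" using 3 by (simp add: norm_Pair)
    then have "N0 c (v, 0) = v^2 / (v * (1 - c))" unfolding N0_def by (simp add: algebra_simps)
    moreover have "v * (1 - c) \<le> 0" using 3 c by (simp add: mult_nonneg_nonpos)
    ultimately have "N0 c (v, 0) \<le> 0" by (simp add: divide_nonneg_nonpos)
    then show False using t e by simp
  qed
qed

lemma gauss_q_formula: "gauss_q p = 9 * ((fst p)^2 + (snd p)^2) * exp (- 2 * ((fst p)^2 + (snd p)^2))"
proof -
  define r where "r = (fst p)^2 + (snd p)^2"
  have f2: "(gauss_f p)^2 = 9 / 4 * exp (- 2 * r)"
    unfolding gauss_f_def r_def by (simp add: power2_eq_square exp_add[symmetric])
  have "gauss_q p = 4 * r * (gauss_f p)^2"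
    unfolding gauss_q_def gauss_fx_def gauss_fy_def r_def by (simp add: power2_eq_square algebra_simps)
  also have "\<dots> = 4 * r * (9 / 4 * exp (- 2 * r))" by (simp only: f2)
  also have "\<dots> = 9 * r * exp (- 2 * r)" by simp
  finally show ?thesis unfolding r_def .
qed

lemma q_bound: "gauss_q p \<le> 9 / (2 * exp 1)"
proof -
  define r where "r = (fst p)^2 + (snd p)^2"
  have "2 * r \<le> exp (2 * r - 1)" using exp_ge_add_one_self[of "2 * r - 1"] by simp
  also have "exp (2 * r - 1) = exp (2 * r) / exp 1" by (simp add: exp_diff)
  finally have "2 * r * exp 1 \<le> exp (2 * r)" by (simp add: field_simps)
  then have "2 * r * exp 1 * exp (- 2 * r) \<le> 1"
    by (metis exp_minus_inverse mult.assoc mult_right_mono exp_ge_zero mult_minus_left)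
  then have "r * exp (- 2 * r) \<le> 1 / (2 * exp 1)" by (simp add: field_simps)
  then show ?thesis unfolding gauss_q_formula r_def[symmetric] by simp
qed

definition pstar :: "real \<times> real" where "pstar = (1 / sqrt 2, 0)"

lemma q_pstar: "gauss_q pstar = 9 / (2 * exp 1)"
proof -
  have h: "(fst pstar)^2 + (snd pstar)^2 = 1/2" unfolding pstar_def by (simp add: power_divide)
  have "gauss_q pstar = 9 * (1/2) * exp (- 2 * (1/2))" unfolding gauss_q_formula h ..
  also have "\<dots> = 9 / 2 * exp (- 1)" by simp
  also have "\<dots> = 9 / (2 * exp 1)" by (simp add: exp_minus field_simps)
  finally show ?thesis .
qed

lemma aa_alt: "aa gbar p = gbar * sqrt (gauss_q p / (1 + gauss_q p))"
  unfolding aa_def by (simp add: real_sqrt_divide)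

lemma ratio_star: "(9 / (2 * exp 1)) / (1 + 9 / (2 * exp 1)) = 9 / (2 * exp 1 + (9::real))"
  by (simp add: field_simps)

lemma aa_pstar: "aa gbar pstar = 3 * gbar / sqrt (2 * exp 1 + 9)"
  unfolding aa_alt q_pstar ratio_star by (simp add: real_sqrt_divide)

lemma aa_le: "gbar > 0 \<Longrightarrow> aa gbar p \<le> 3 * gbar / sqrt (2 * exp 1 + 9)"
proof -
  assume g: "gbar > 0"
  have q0: "gauss_q p \<ge> 0" by (rule q_nonneg)
  have mono: "x / (1 + x) \<le> y / (1 + y)" if "0 \<le> x" "x \<le> y" for x y :: real
    using that by (simp add: field_simps)
  have "gauss_q p / (1 + gauss_q p) \<le> (9 / (2 * exp 1)) / (1 + 9 / (2 * exp 1))"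
    by (rule mono[OF q0 q_bound])
  then have "sqrt (gauss_q p / (1 + gauss_q p)) \<le> sqrt ((9 / (2 * exp 1)) / (1 + 9 / (2 * exp 1)))"
    by simp
  then have "aa gbar p \<le> aa gbar pstar" unfolding aa_alt q_pstar using g by simp
  then show ?thesis unfolding aa_pstar .
qed

lemma aa_nonneg: "gbar > 0 \<Longrightarrow> aa gbar p \<ge> 0"
  unfolding aa_def using q_nonneg by simp

lemma delta_arith:
  fixes gbar eta S :: real
  assumes g: "gbar > 0" and e: "0 \<le> eta" "eta \<le> 1" and S: "S > 0"
  shows "(if eta \<le> 1/3 then S / (3 * (1 - eta)) else S / (6 * eta)) > gbar
     \<longleftrightarrow> (6 * eta * gbar < S \<and> 3 * (1 - eta) * gbar < S)"
proof (cases "eta \<le> 1/3")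
  case True
  then have p: "3 * (1 - eta) > 0" by simp
  have "gbar < S / (3 * (1 - eta)) \<longleftrightarrow> 3 * (1 - eta) * gbar < S"
    using p by (simp add: pos_less_divide_eq mult.commute)
  moreover have "6 * eta * gbar \<le> 3 * (1 - eta) * gbar" using True g by (intro mult_right_mono) auto
  ultimately show ?thesis using True by auto
next
  case False
  then have p: "6 * eta > 0" by simp
  have "gbar < S / (6 * eta) \<longleftrightarrow> 6 * eta * gbar < S"
    using p by (simp add: pos_less_divide_eq mult.commute)
  moreover have "3 * (1 - eta) * gbar \<le> 6 * eta * gbar" using False g by (intro mult_right_mono) auto
  ultimately show ?thesis using False by auto
qed

theorem lemma5p1:
  fixes gbar eta :: real
  assumes "gbar > 0" and "0 \<le> eta" and "eta \<le> 1"
  shows "slippery_strongly_convex gbar eta \<longleftrightarrow> gbar < delta2 eta"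
proof -
  note g = assms(1) and e = assms(2,3)
  define S where "S = sqrt (2 * exp 1 + 9)"
  have S: "S > 0" unfolding S_def by (simp add: add_pos_nonneg)
  define amax where "amax = 3 * gbar / S"
  have D: "gbar < delta2 eta \<longleftrightarrow> (eta * amax < 1/2 \<and> (1 - eta) * amax < 1)"
  proof -
    have "gbar < delta2 eta \<longleftrightarrow> (6 * eta * gbar < S \<and> 3 * (1 - eta) * gbar < S)"
      using delta_arith[OF g e S] unfolding delta2_def S_def[symmetric] by simp
    moreover have "eta * amax < 1/2 \<longleftrightarrow> 6 * eta * gbar < S"
      unfolding amax_def using S by (simp add: field_simps)
    moreover have "(1 - eta) * amax < 1 \<longleftrightarrow> 3 * (1 - eta) * gbar < S"
      unfolding amax_def using S by (simp add: field_simps)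
    ultimately show ?thesis by simp
  qed
  have Tne: "TT p x \<noteq> 0" if "x \<noteq> 0" for p x
    using that TT_inj[of p] linear_0[OF TT_linear[of p]] by (metis injD)
  show ?thesis
  proof
    assume conv: "slippery_strongly_convex gbar eta"
    show "gbar < delta2 eta"
    proof (rule ccontr)
      assume nd: "\<not> gbar < delta2 eta"
      define p where "p = pstar"
      define a where "a = aa gbar p"
      define c where "c = eta * a"
      have a: "a = amax" unfolding a_def p_def amax_def aa_pstar S_def by simp
      have a0: "a \<ge> 0" unfolding a_def using aa_nonneg[OF g] by simp
      have c0: "c \<ge> 0" unfolding c_def using a0 e by simp
      have ex1: "\<exists>!t. t > 0 \<and> N0 c (x - t *\<^sub>R (a, 0)) = t" if "x \<noteq> 0" for x
      proof -
        have "\<exists>!t. t > 0 \<and> Fbase gbar eta p (TT p x - t *\<^sub>R wind gbar p) = t"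
          using conv Tne[OF that] unfolding slippery_strongly_convex_def by blast
        then show ?thesis unfolding Fbase_TT_wind[OF g] a_def c_def .
      qed
      show False
      proof (cases "1 + c \<le> a")
        case True
        have "\<exists>t>0. N0 c ((-1, 0) - t *\<^sub>R (a, 0)) = t" using ex1[of "(-1, 0)"] by (auto simp: zero_prod_def)
        then show False using no_root_C5[OF c0 a0 True] by simp
      next
        case False
        then have a1: "a < 1 + c" by simp
        show False
        proof (cases "1 \<le> c")
          case True
          have "\<exists>t>0. N0 c ((1, 0) - t *\<^sub>R (a, 0)) = t" using ex1[of "(1, 0)"] by (auto simp: zero_prod_def)
          then show False using no_root_C4[OF True a0 a1] by simp
        next
          case False
          then have c1: "c < 1" by simp
          interpret canon a c using c0 c1 a0 a1 by unfold_locales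
          show False
          proof (cases "1/2 \<le> c")
            case True
            define x0 :: "real \<times> real" where "x0 = (1 - c + a, 0)"
            have "x0 \<noteq> 0" unfolding x0_def using c1 a0 by (simp add: zero_prod_def)
            then have "hessian_posdef (\<lambda>z. (slippery gbar eta p z)^2) (TT p x0)"
              using conv Tne unfolding slippery_strongly_convex_def by blast
            then have "hessian_posdef (\<lambda>z. (slippery gbar eta p (TT p z))^2) x0"
              by (rule hess_transfer[OF TT_linear TT_inj])
            then have "hessian_posdef (\<lambda>z. (S0 a c z)^2) x0"
              unfolding slippery_TT[OF g] a_def c_def .
            then show False using canon_notPD[OF True] unfolding x0_def by simp
          next
            case False
            then have "eta * amax < 1/2" using a c_def by simp
            moreover have "(1 - eta) * amax < 1" using a1 a c_def by (simp add: algebra_simps)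
            ultimately show False using D nd by simp
          qed
        qed
      qed
    qed
  next
    assume lt: "gbar < delta2 eta"
    then have b1: "eta * amax < 1/2" and b2: "(1 - eta) * amax < 1" using D by auto
    show "slippery_strongly_convex gbar eta"
      unfolding slippery_strongly_convex_def
    proof (intro allI impI conjI)
      fix p w :: "real \<times> real"
      assume w: "w \<noteq> 0"
      define a where "a = aa gbar p"
      define c where "c = eta * a"
      have a0: "a \<ge> 0" unfolding a_def using aa_nonneg[OF g] by simp
      have aM: "a \<le> amax" unfolding a_def amax_def S_def using aa_le[OF g] by simp
      have c0: "c \<ge> 0" unfolding c_def using a0 e by simp
      have ch: "c < 1/2"
      proof -
        have "eta * a \<le> eta * amax" using aM e by (intro mult_left_mono) auto
        then show ?thesis unfolding c_def using b1 by simp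
      qed
      have a1: "a < 1 + c"
      proof -
        have "(1 - eta) * a \<le> (1 - eta) * amax" using aM e by (intro mult_left_mono) auto
        then show ?thesis unfolding c_def using b2 by (simp add: algebra_simps)
      qed
      have c1: "c < 1" using ch by simp
      interpret canon a c using c0 c1 a0 a1 by unfold_locales
      define x where "x = TI p w"
      have wx: "w = TT p x" unfolding x_def by (simp add: TT_TI)
      have x: "x \<noteq> 0" using w wx TT_linear[of p] linear_0 by metis
      show "\<exists>!t. t > 0 \<and> Fbase gbar eta p (w - t *\<^sub>R wind gbar p) = t"
        unfolding wx Fbase_TT_wind[OF g] a_def[symmetric] c_def[symmetric]
        by (rule root_ex1[OF c0 c1 a0 a1 x])
      have "hessian_posdef (\<lambda>z. (S0 a c z)^2) (TI p w)"
        using canon_PD[OF ch x] unfolding x_def .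
      then have "hessian_posdef (\<lambda>z. (S0 a c (TI p z))^2) w"
        by (rule hess_transfer[OF TI_linear TI_inj])
      moreover have "(\<lambda>z. (S0 a c (TI p z))^2) = (\<lambda>z. (slippery gbar eta p z)^2)"
      proof
        fix z
        have "slippery gbar eta p z = slippery gbar eta p (TT p (TI p z))" by (simp add: TT_TI)
        also have "\<dots> = S0 a c (TI p z)" unfolding slippery_TT[OF g] a_def c_def ..
        finally show "(S0 a c (TI p z))^2 = (slippery gbar eta p z)^2" by simp
      qed
      ultimately show "hessian_posdef (\<lambda>z. (slippery gbar eta p z)^2) w" by simp
    qed
  qed
qed

end
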